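(* Let $\mathfrak g$ be a real Lie algebra, $r\in\mathfrak g\otimes\mathfrak g$, and $\kappa\in\mathbb R$. Let $\alpha=(r-r^t)/2$ and $\beta=(r+r^t)/2$ (as linear maps $\mathfrak g^*\to\mathfrak g$), and suppose $\beta$ is invariant, i.e. $(\mathrm{ad}(x)\otimes\mathrm{id}+\mathrm{id}\otimes\mathrm{ad}(x))\beta=0$ for all $x\in\mathfrak g$. Then $r$ satisfies $[r_{12},r_{13}]+[r_{12},r_{23}]+[r_{13},r_{23}]=\frac{\kappa+1}{4}[r_{13}+r_{31},r_{23}+r_{32}]$ if and only if $[\alpha(a^* ),\alpha(b^* )]-\alpha(\mathrm{ad}^*(\alpha(a^* ))b^*-\mathrm{ad}^*(\alpha(b^* ))a^* )=\kappa[\beta(a^* ),\beta(b^* )]$ for all $a^*,b^*\in\mathfrak g^*$.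
   Context: $\mathfrak g$ is finite-dimensional. An element $r\in\mathfrak g\otimes\mathfrak g$ is identified with the linear map $r:\mathfrak g^*\to\mathfrak g$, $\langle r(a^* ),b^*\rangle=\langle a^*\otimes b^*,r\rangle$; $r^t$ is the map induced by $\sigma(r)$, where $\sigma(x\otimes y)=y\otimes x$. The coadjoint representation is $\langle\mathrm{ad}^*(x)a^*,y\rangle=-\langle a^*,[x,y]\rangle$. For $r=\sum_i a_i\otimes b_i$: $[r_{12},r_{13}]=\sum_{i,j}[a_i,a_j]\otimes b_i\otimes b_j$, $[r_{12},r_{23}]=\sum_{i,j}a_i\otimes[b_i,a_j]\otimes b_j$, $[r_{13},r_{23}]=\sum_{i,j}a_i\otimes a_j\otimes[b_i,b_j]$. Writing $s=r+\sigma(r)=\sum_k c_k\otimes d_k$, one has $r_{13}+r_{31}=s_{13}$, $r_{23}+r_{32}=s_{23}$, and $[r_{13}+r_{31},r_{23}+r_{32}]:=\sum_{k,l}c_k\otimes c_l\otimes[d_k,d_l]$. *)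

theory Defs
  imports "HOL-Analysis.Analysis"
begin

text \<open>A finite-dimensional real Lie algebra is modelled as
  real^'n (basis e_i = axis i 1) with a Lie bracket br. Its dual is modelled as
  real^'n via the dual basis. An element r of g (x) g is given by its coefficient
  matrix: r = sum_{i,j} r$i$j e_i (x) e_j. Elements of g (x) g (x) g are given by
  their coefficient functions T p q s (coefficient of e_p (x) e_q (x) e_s).\<close>

definition lie_algebra :: "(real^'n \<Rightarrow> real^'n \<Rightarrow> real^'n) \<Rightarrow> bool" where
  "lie_algebra br \<longleftrightarrow> bilinear br \<and> (\<forall>x y. br x y = - br y x)
     \<and> (\<forall>x y z. br x (br y z) + br y (br z x) + br z (br x y) = 0)"

definition ebas :: "'n::finite \<Rightarrow> real^'n" where
  "ebas i = axis i 1"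

definition sc :: "(real^'n \<Rightarrow> real^'n \<Rightarrow> real^'n) \<Rightarrow> 'n \<Rightarrow> 'n \<Rightarrow> 'n \<Rightarrow> real" where
  "sc br i j p = (br (ebas i) (ebas j)) $ p"

definition flip :: "real^'n^'n \<Rightarrow> real^'n^'n" where
  "flip r = transpose r"

text \<open>[r12, r13] = sum [a_i,a_j] (x) b_i (x) b_j\<close>
definition br12_13 :: "(real^'n \<Rightarrow> real^'n \<Rightarrow> real^'n) \<Rightarrow> real^'n^'n \<Rightarrow> 'n \<Rightarrow> 'n \<Rightarrow> 'n \<Rightarrow> real" where
  "br12_13 br r p q s = (\<Sum>i\<in>UNIV. \<Sum>j\<in>UNIV. r$i$q * r$j$s * sc br i j p)"

text \<open>[r12, r23] = sum a_i (x) [b_i,a_j] (x) b_j\<close>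
definition br12_23 :: "(real^'n \<Rightarrow> real^'n \<Rightarrow> real^'n) \<Rightarrow> real^'n^'n \<Rightarrow> 'n \<Rightarrow> 'n \<Rightarrow> 'n \<Rightarrow> real" where
  "br12_23 br r p q s = (\<Sum>k\<in>UNIV. \<Sum>j\<in>UNIV. r$p$k * r$j$s * sc br k j q)"

text \<open>[r13, r23] = sum a_i (x) a_j (x) [b_i,b_j]; applied to s = r + sigma(r) this is
  [r13 + r31, r23 + r32]\<close>
definition br13_23 :: "(real^'n \<Rightarrow> real^'n \<Rightarrow> real^'n) \<Rightarrow> real^'n^'n \<Rightarrow> 'n \<Rightarrow> 'n \<Rightarrow> 'n \<Rightarrow> real" where
  "br13_23 br r p q s = (\<Sum>k\<in>UNIV. \<Sum>l\<in>UNIV. r$p$k * r$q$l * sc br k l s)"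

text \<open>r as a linear map g* -> g:  <r(a), b> = <a (x) b, r> = sum r_ij a_i b_j\<close>
definition tmap :: "real^'n^'n \<Rightarrow> real^'n \<Rightarrow> real^'n" where
  "tmap r a = (\<chi> j. \<Sum>i\<in>UNIV. a$i * r$i$j)"

definition alpha_map :: "real^'n^'n \<Rightarrow> real^'n \<Rightarrow> real^'n" where
  "alpha_map r a = (1/2) *\<^sub>R (tmap r a - tmap (flip r) a)"

definition beta_map :: "real^'n^'n \<Rightarrow> real^'n \<Rightarrow> real^'n" where
  "beta_map r a = (1/2) *\<^sub>R (tmap r a + tmap (flip r) a)"

text \<open>coadjoint action: <ad*(x) a, y> = - <a, [x,y]>\<close>
definition coad :: "(real^'n \<Rightarrow> real^'n \<Rightarrow> real^'n) \<Rightarrow> real^'n \<Rightarrow> real^'n \<Rightarrow> real^'n" where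
  "coad br x a = (\<chi> j. - (\<Sum>p\<in>UNIV. a$p * (br x (ebas j))$p))"

text \<open>beta as tensor: (r + sigma(r))/2. Invariance:
  (ad(x) (x) id + id (x) ad(x)) beta = 0 for all x, in coordinates.\<close>
definition beta_tensor :: "real^'n^'n \<Rightarrow> real^'n^'n" where
  "beta_tensor r = (1/2) *\<^sub>R (r + flip r)"

definition invariant_tensor :: "(real^'n \<Rightarrow> real^'n \<Rightarrow> real^'n) \<Rightarrow> real^'n^'n \<Rightarrow> bool" where
  "invariant_tensor br t \<longleftrightarrow> (\<forall>x p q.
     (\<Sum>i\<in>UNIV. t$i$q * (br x (ebas i))$p) + (\<Sum>j\<in>UNIV. t$p$j * (br x (ebas j))$q) = 0)"

end

theory Submission imports Defs begin

lemma ebas_comp: "ebas j $ k = (if k = j then 1 else 0)"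
  by (simp add: ebas_def axis_def)

lemma ebas_mult: "x * ebas j $ k = (if k = j then x else 0)" "ebas j $ k * x = (if k = j then x else 0)"
  by (simp_all add: ebas_comp)

lemma if0_ops: "(if P then a else 0) * b = (if P then a * b else (0::real))"
  "(if P then a else 0) / b = (if P then a / b else (0::real))"
  by auto

lemma br_coord:
  assumes "bilinear br"
  shows "br x y $ t = (\<Sum>i\<in>UNIV. \<Sum>j\<in>UNIV. x$i * y$j * sc br i j t)"
proof -
  have ex: "x = (\<Sum>i\<in>UNIV. x$i *\<^sub>R ebas i)" for x :: "real^'a"
    using basis_expansion[of x] by (simp add: scalar_mult_eq_scaleR ebas_def)
  have l1: "linear (\<lambda>x. br x y)" for y using assms by (simp add: bilinear_def)
  have l2: "linear (\<lambda>y. br x y)" for x using assms by (simp add: bilinear_def)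
  have "br x y = br (\<Sum>i\<in>UNIV. x$i *\<^sub>R ebas i) (\<Sum>j\<in>UNIV. y$j *\<^sub>R ebas j)"
    using ex[of x] ex[of y] by simp
  also have "\<dots> = (\<Sum>j\<in>UNIV. \<Sum>i\<in>UNIV. (x$i * y$j) *\<^sub>R br (ebas i) (ebas j))"
    by (simp add: linear_sum[OF l1] linear_sum[OF l2] bilinear_lmul[OF assms] bilinear_rmul[OF assms]
       scaleR_sum_right mult.commute)
  also have "\<dots> = (\<Sum>i\<in>UNIV. \<Sum>j\<in>UNIV. (x$i * y$j) *\<^sub>R br (ebas i) (ebas j))"
    by (rule sum.swap)
  finally show ?thesis by (simp add: sc_def)
qed

lemma br_coord_e:
  assumes "bilinear br"
  shows "br x (ebas j) $ m = (\<Sum>i\<in>UNIV. x$i * sc br i j m)"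
  by (simp add: br_coord[OF assms] ebas_mult if0_ops)

lemma coad_comp:
  assumes "bilinear br"
  shows "coad br x a $ j = - (\<Sum>m\<in>UNIV. a$m * (\<Sum>i\<in>UNIV. x$i * sc br i j m))"
  by (simp add: coad_def br_coord_e[OF assms])

lemma alpha_comp: "alpha_map r v $ t = (\<Sum>j\<in>UNIV. v$j * ((r$j$t - r$t$j)/2))"
  by (simp add: alpha_map_def tmap_def flip_def transpose_def sum_subtractf[symmetric] sum_divide_distrib algebra_simps diff_divide_distrib)

lemma beta_comp: "beta_map r v $ t = (\<Sum>j\<in>UNIV. v$j * ((r$j$t + r$t$j)/2))"
  by (simp add: beta_map_def tmap_def flip_def transpose_def sum.distrib[symmetric] sum_divide_distrib algebra_simps add_divide_distrib)

lemma alpha_ebas: "alpha_map r (ebas p) = (\<chi> i. (r$p$i - r$i$p)/2)"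
  by (simp add: vec_eq_iff alpha_comp ebas_mult if0_ops)

lemma beta_ebas: "beta_map r (ebas p) = (\<chi> i. (r$p$i + r$i$p)/2)"
  by (simp add: vec_eq_iff beta_comp ebas_mult if0_ops)

lemma linear_alpha: "linear (alpha_map r)"
  by (auto simp: linear_iff alpha_map_def tmap_def vec_eq_iff sum.distrib algebra_simps sum_distrib_left)

lemma linear_beta: "linear (beta_map r)"
  by (auto simp: linear_iff beta_map_def tmap_def vec_eq_iff sum.distrib algebra_simps sum_distrib_left)

lemma coad_bil:
  assumes "bilinear br"
  shows "coad br (x + y) a = coad br x a + coad br y a" "coad br (c *\<^sub>R x) a = c *\<^sub>R coad br x a"
    "coad br x (a + b) = coad br x a + coad br x b" "coad br x (c *\<^sub>R a) = c *\<^sub>R coad br x a"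
  by (auto simp: coad_def vec_eq_iff bilinear_ladd[OF assms] bilinear_lmul[OF assms]
     sum.distrib algebra_simps sum_distrib_left)

definition Dfun :: "(real^'n \<Rightarrow> real^'n \<Rightarrow> real^'n) \<Rightarrow> real^'n^'n \<Rightarrow> real \<Rightarrow> real^'n \<Rightarrow> real^'n \<Rightarrow> real^'n" where
  "Dfun br r \<kappa> a b = br (alpha_map r a) (alpha_map r b)
              - alpha_map r (coad br (alpha_map r a) b - coad br (alpha_map r b) a)
              - \<kappa> *\<^sub>R br (beta_map r a) (beta_map r b)"

lemma swap2: "(\<And>i j. f i j = g j i) \<Longrightarrow> (\<Sum>i\<in>UNIV. \<Sum>j\<in>UNIV. f i j) = (\<Sum>j\<in>UNIV. \<Sum>i\<in>UNIV. g j i)"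
  by simp (rule sum.swap)

lemma same2: "(\<And>i j. f i j = g i j) \<Longrightarrow> (\<Sum>i\<in>UNIV. \<Sum>j\<in>UNIV. f i j) = (\<Sum>i\<in>UNIV. \<Sum>j\<in>UNIV. g i j)"
  by simp

lemma key:
  assumes lie: "lie_algebra br" and inv0: "invariant_tensor br (beta_tensor r)"
  shows "br12_13 br r p q t + br12_23 br r p q t + br13_23 br r p q t
     - (\<kappa> + 1) / 4 * br13_23 br (r + flip r) p q t = Dfun br r \<kappa> (ebas p) (ebas q) $ t"
proof -
  have bil: "bilinear br" using lie by (simp add: lie_algebra_def)
  define c where "c = sc br"
  define A where "A i j = (r$i$j - r$j$i)/2" for i j
  define B where "B i j = (r$i$j + r$j$i)/2" for i j
  have rAB: "r$i$j = A i j + B i j" for i j by (simp add: A_def B_def field_simps)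
  have sB: "(r + flip r)$i$j = 2 * B i j" for i j by (simp add: B_def flip_def transpose_def)
  have Aant: "A i j = - A j i" for i j by (simp add: A_def diff_divide_distrib)
  have cant: "c i j k = - c j i k" for i j k
  proof -
    have "br (ebas i) (ebas j) = - br (ebas j) (ebas i)" using lie unfolding lie_algebra_def by blast
    then show ?thesis unfolding c_def sc_def by (metis vector_uminus_component)
  qed
  have inv: "(\<Sum>i\<in>UNIV. B i q * c k i p) + (\<Sum>j\<in>UNIV. B p j * c k j q) = 0" for k p q
  proof -
    have "(\<Sum>i\<in>UNIV. beta_tensor r $i$q * br (ebas k) (ebas i) $ p) + (\<Sum>j\<in>UNIV. beta_tensor r $p$j * br (ebas k) (ebas j) $ q) = 0"
      using inv0 unfolding invariant_tensor_def by blast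
    then show ?thesis by (simp add: beta_tensor_def flip_def transpose_def B_def c_def sc_def mult.commute)
  qed
  define X1 where "X1 = (\<Sum>i\<in>UNIV. \<Sum>j\<in>UNIV. A i q * A j t * c i j p)"
  define Y1 where "Y1 = (\<Sum>i\<in>UNIV. \<Sum>j\<in>UNIV. A i q * B j t * c i j p)"
  define Z1 where "Z1 = (\<Sum>i\<in>UNIV. \<Sum>j\<in>UNIV. B i q * A j t * c i j p)"
  define W1 where "W1 = (\<Sum>i\<in>UNIV. \<Sum>j\<in>UNIV. B i q * B j t * c i j p)"
  define X2 where "X2 = (\<Sum>k\<in>UNIV. \<Sum>j\<in>UNIV. A p k * A j t * c k j q)"
  define Y2 where "Y2 = (\<Sum>k\<in>UNIV. \<Sum>j\<in>UNIV. A p k * B j t * c k j q)"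
  define Z2 where "Z2 = (\<Sum>k\<in>UNIV. \<Sum>j\<in>UNIV. B p k * A j t * c k j q)"
  define W2 where "W2 = (\<Sum>k\<in>UNIV. \<Sum>j\<in>UNIV. B p k * B j t * c k j q)"
  define X3 where "X3 = (\<Sum>k\<in>UNIV. \<Sum>l\<in>UNIV. A p k * A q l * c k l t)"
  define Y3 where "Y3 = (\<Sum>k\<in>UNIV. \<Sum>l\<in>UNIV. A p k * B q l * c k l t)"
  define Z3 where "Z3 = (\<Sum>k\<in>UNIV. \<Sum>l\<in>UNIV. B p k * A q l * c k l t)"
  define W3 where "W3 = (\<Sum>k\<in>UNIV. \<Sum>l\<in>UNIV. B p k * B q l * c k l t)"
  have e4: "(a + b) * (x + y) * z = a * x * z + a * y * z + b * x * z + b * y * z" for a b x y z :: real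
    by (simp add: algebra_simps)
  have b1: "br12_13 br r p q t = X1 + Y1 + Z1 + W1"
    unfolding br12_13_def X1_def Y1_def Z1_def W1_def c_def[symmetric] rAB e4
    by (simp only: sum.distrib)
  have b2: "br12_23 br r p q t = X2 + Y2 + Z2 + W2"
    unfolding br12_23_def X2_def Y2_def Z2_def W2_def c_def[symmetric] rAB e4
    by (simp only: sum.distrib)
  have b3: "br13_23 br r p q t = X3 + Y3 + Z3 + W3"
    unfolding br13_23_def X3_def Y3_def Z3_def W3_def c_def[symmetric] rAB e4
    by (simp only: sum.distrib)
  have e2: "(2 * a) * (2 * b) * z = 4 * (a * b * z)" for a b z :: real by simp
  have b4: "br13_23 br (r + flip r) p q t = 4 * W3"
    unfolding br13_23_def W3_def c_def[symmetric] sB e2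
    by (simp only: sum_distrib_left)
  have csw1: "(\<Sum>i\<in>UNIV. f i * c i j k) = - (\<Sum>i\<in>UNIV. f i * c j i k)" for f j k
    unfolding sum_negf[symmetric] by (rule sum.cong) (auto simp: cant[of _ j k])
  have z1: "Z1 + Z2 = 0"
  proof -
    have "Z1 = (\<Sum>j\<in>UNIV. A j t * (\<Sum>i\<in>UNIV. B i q * c i j p))"
      unfolding Z1_def sum_distrib_left by (rule swap2) (simp add: mult_ac)
    moreover have "Z2 = (\<Sum>j\<in>UNIV. A j t * (\<Sum>k\<in>UNIV. B p k * c k j q))"
      unfolding Z2_def sum_distrib_left by (rule swap2) (simp add: mult_ac)
    ultimately have "Z1 + Z2 = (\<Sum>j\<in>UNIV. A j t * ((\<Sum>i\<in>UNIV. B i q * c i j p) + (\<Sum>k\<in>UNIV. B p k * c k j q)))"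
      by (simp add: sum.distrib ring_distribs)
    also have "\<dots> = 0"
    proof (rule sum.neutral, rule ballI)
      fix j
      have "(\<Sum>i\<in>UNIV. B i q * c i j p) + (\<Sum>k\<in>UNIV. B p k * c k j q) = 0"
        unfolding csw1 using inv[of q j p] by linarith
      then show "A j t * ((\<Sum>i\<in>UNIV. B i q * c i j p) + (\<Sum>k\<in>UNIV. B p k * c k j q)) = 0" by simp
    qed
    finally show ?thesis .
  qed
  have w1: "W1 + W2 = 0"
  proof -
    have "W1 = (\<Sum>j\<in>UNIV. B j t * (\<Sum>i\<in>UNIV. B i q * c i j p))"
      unfolding W1_def sum_distrib_left by (rule swap2) (simp add: mult_ac)
    moreover have "W2 = (\<Sum>j\<in>UNIV. B j t * (\<Sum>k\<in>UNIV. B p k * c k j q))"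
      unfolding W2_def sum_distrib_left by (rule swap2) (simp add: mult_ac)
    ultimately have "W1 + W2 = (\<Sum>j\<in>UNIV. B j t * ((\<Sum>i\<in>UNIV. B i q * c i j p) + (\<Sum>k\<in>UNIV. B p k * c k j q)))"
      by (simp add: sum.distrib ring_distribs)
    also have "\<dots> = 0"
    proof (rule sum.neutral, rule ballI)
      fix j
      have "(\<Sum>i\<in>UNIV. B i q * c i j p) + (\<Sum>k\<in>UNIV. B p k * c k j q) = 0"
        unfolding csw1 using inv[of q j p] by linarith
      then show "B j t * ((\<Sum>i\<in>UNIV. B i q * c i j p) + (\<Sum>k\<in>UNIV. B p k * c k j q)) = 0" by simp
    qed
    finally show ?thesis .
  qed
  have y1: "Y1 + Z3 = 0"
  proof -
    have "Y1 = (\<Sum>i\<in>UNIV. A i q * (\<Sum>j\<in>UNIV. B j t * c i j p))"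
      unfolding Y1_def sum_distrib_left by (rule same2) (simp add: mult_ac)
    also have "\<dots> = - (\<Sum>i\<in>UNIV. A i q * (\<Sum>l\<in>UNIV. B p l * c i l t))"
      unfolding sum_negf[symmetric]
    proof (rule sum.cong[OF refl])
      fix i :: 'a
      have "(\<Sum>j\<in>UNIV. B j t * c i j p) = - (\<Sum>l\<in>UNIV. B p l * c i l t)"
        using inv[of t i p] by (simp add: eq_neg_iff_add_eq_0)
      then show "A i q * (\<Sum>j\<in>UNIV. B j t * c i j p) = - (A i q * (\<Sum>l\<in>UNIV. B p l * c i l t))" by simp
    qed
    finally have 1: "Y1 = \<dots>" .
    have "Z3 = (\<Sum>l\<in>UNIV. A q l * (\<Sum>k\<in>UNIV. B p k * c k l t))"
      unfolding Z3_def sum_distrib_left by (rule swap2) (simp add: mult_ac)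
    also have "\<dots> = (\<Sum>i\<in>UNIV. A i q * (\<Sum>l\<in>UNIV. B p l * c i l t))"
      by (rule sum.cong) (auto simp: Aant[of q] csw1)
    finally show ?thesis using 1 by simp
  qed
  have y2: "Y2 + Y3 = 0"
  proof -
    have "Y2 = (\<Sum>k\<in>UNIV. A p k * (\<Sum>j\<in>UNIV. B j t * c k j q))"
      unfolding Y2_def sum_distrib_left by (rule same2) (simp add: mult_ac)
    moreover have "Y3 = (\<Sum>k\<in>UNIV. A p k * (\<Sum>l\<in>UNIV. B q l * c k l t))"
      unfolding Y3_def sum_distrib_left by (rule same2) (simp add: mult_ac)
    ultimately have "Y2 + Y3 = (\<Sum>k\<in>UNIV. A p k * ((\<Sum>j\<in>UNIV. B j t * c k j q) + (\<Sum>l\<in>UNIV. B q l * c k l t)))"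
      by (simp add: sum.distrib ring_distribs)
    also have "\<dots> = 0"
      using inv by simp
    finally show ?thesis .
  qed
  have lhs: "br12_13 br r p q t + br12_23 br r p q t + br13_23 br r p q t
     - (\<kappa> + 1) / 4 * br13_23 br (r + flip r) p q t = X1 + X2 + X3 - \<kappa> * W3"
    unfolding b1 b2 b3 b4 using z1 w1 y1 y2 by (simp add: algebra_simps)
  have ae: "alpha_map r (ebas i) = (\<chi> j. A i j)" for i by (simp add: alpha_ebas A_def)
  have be: "beta_map r (ebas i) = (\<chi> j. B i j)" for i by (simp add: beta_ebas B_def)
  have ac: "alpha_map r v $ k = (\<Sum>j\<in>UNIV. v$j * A j k)" for v k by (simp add: alpha_comp A_def)
  have T1: "br (alpha_map r (ebas p)) (alpha_map r (ebas q)) $ t = X3"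
    by (simp add: ae br_coord[OF bil] X3_def c_def)
  have T3: "br (beta_map r (ebas p)) (beta_map r (ebas q)) $ t = W3"
    by (simp add: be br_coord[OF bil] W3_def c_def)
  have co: "coad br (alpha_map r (ebas i)) (ebas k) $ j = - (\<Sum>m\<in>UNIV. A i m * c m j k)" for i k j
    by (simp add: coad_comp[OF bil] ae ebas_mult if0_ops c_def)
  have T2: "alpha_map r (coad br (alpha_map r (ebas p)) (ebas q) - coad br (alpha_map r (ebas q)) (ebas p)) $ t
     = (\<Sum>j\<in>UNIV. \<Sum>m\<in>UNIV. A q m * c m j p * A j t) - (\<Sum>j\<in>UNIV. \<Sum>m\<in>UNIV. A p m * c m j q * A j t)"
    by (simp add: ac co sum_distrib_right sum_subtractf[symmetric] algebra_simps; simp add: sum_distrib_left right_diff_distrib)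
  have X1': "X1 = - (\<Sum>j\<in>UNIV. \<Sum>m\<in>UNIV. A q m * c m j p * A j t)"
    unfolding X1_def sum_negf[symmetric] by (rule swap2) (simp add: Aant[of _ q])
  have X2': "X2 = (\<Sum>j\<in>UNIV. \<Sum>m\<in>UNIV. A p m * c m j q * A j t)"
    unfolding X2_def by (rule swap2) (simp add: mult_ac)
  show ?thesis
    unfolding lhs Dfun_def using T1 T2 T3 X1' X2' by simp
qed

lemma bilinear_Dfun:
  assumes bil: "bilinear br"
  shows "bilinear (Dfun br r \<kappa>)"
proof -
  note la = linear_add[OF linear_alpha] linear_cmul[OF linear_alpha] linear_diff[OF linear_alpha]
  note lb = linear_add[OF linear_beta] linear_cmul[OF linear_beta]
  note bb = bilinear_ladd[OF bil] bilinear_radd[OF bil] bilinear_lmul[OF bil] bilinear_rmul[OF bil]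
  note cb = coad_bil[OF bil]
  show ?thesis
    unfolding bilinear_def linear_iff Dfun_def
    by (simp add: la lb bb cb algebra_simps)
qed

lemma basis_ebas: "(i :: real^'n) \<in> Basis \<Longrightarrow> \<exists>k. i = ebas k"
  by (auto simp: Basis_vec_def ebas_def)

theorem theorem3p9:
  fixes br :: "real^'n \<Rightarrow> real^'n \<Rightarrow> real^'n"
    and r :: "real^'n^'n"
    and \<kappa> :: real
  assumes "lie_algebra br"
    and "invariant_tensor br (beta_tensor r)"
  shows "(\<forall>p q s. br12_13 br r p q s + br12_23 br r p q s + br13_23 br r p q s
              = (\<kappa> + 1) / 4 * br13_23 br (r + flip r) p q s)
     \<longleftrightarrow> (\<forall>a b. br (alpha_map r a) (alpha_map r b)
              - alpha_map r (coad br (alpha_map r a) b - coad br (alpha_map r b) a)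
              = \<kappa> *\<^sub>R br (beta_map r a) (beta_map r b))"
proof -
  have bil: "bilinear br" using assms(1) by (simp add: lie_algebra_def)
  have eqv: "(\<forall>a b. br (alpha_map r a) (alpha_map r b)
              - alpha_map r (coad br (alpha_map r a) b - coad br (alpha_map r b) a)
              = \<kappa> *\<^sub>R br (beta_map r a) (beta_map r b)) \<longleftrightarrow> (\<forall>a b. Dfun br r \<kappa> a b = 0)"
    by (simp add: Dfun_def)
  have k: "br12_13 br r p q s + br12_23 br r p q s + br13_23 br r p q s
              = (\<kappa> + 1) / 4 * br13_23 br (r + flip r) p q s \<longleftrightarrow> Dfun br r \<kappa> (ebas p) (ebas q) $ s = 0" for p q s
    using key[OF assms, of p q s \<kappa>] by linarith
  show ?thesis
    unfolding eqv k
  proof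
    assume h: "\<forall>p q s. Dfun br r \<kappa> (ebas p) (ebas q) $ s = 0"
    have "Dfun br r \<kappa> = (\<lambda>a b. 0)"
    proof (rule bilinear_eq_stdbasis[OF bilinear_Dfun[OF bil]])
      show "bilinear (\<lambda>(a::real^'n) (b::real^'n). 0::real^'n)"
        by (simp add: bilinear_def linear_zero)
      fix i j :: "real^'n" assume "i \<in> Basis" "j \<in> Basis"
      then obtain k l where kl: "i = ebas k" "j = ebas l" using basis_ebas by blast
      show "Dfun br r \<kappa> i j = 0" unfolding kl using h by (simp add: vec_eq_iff)
    qed
    then show "\<forall>a b. Dfun br r \<kappa> a b = 0" by simp
  next
    assume "\<forall>a b. Dfun br r \<kappa> a b = 0"
    then show "\<forall>p q s. Dfun br r \<kappa> (ebas p) (ebas q) $ s = 0" by simp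
  qed
qed

end
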